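(* In the two-party one-way communication (Holevo–Frenkel–Weiner) scenario, the utility of a one-bit classical channel increases when the assisting shared randomness is increased from $1$ bit to $\log 3$ bits: there exist finite sets $\mathcal{X},\mathcal{B}$ and a payoff function $\beta$ on correlations such that $\sup_{P\in\mathcal{C}_3}\beta(P)>\sup_{P\in\mathcal{C}_2}\beta(P)$.
   Context: Scenario: Alice receives an input $x$ from a finite set $\mathcal{X}$, Bob must output $b$ from a finite set $\mathcal{B}$; a correlation is $P=(P(b|x))$, a task is a real payoff function $\beta$ on correlations, and the utility of a resource is $\sup\beta(P)$ over correlations achievable with it. $\mathcal{C}$: correlations $P(b|x)=\sum_{m\in\{0,1\}}E(m|x)D(b|m)$ with $E(\cdot|x)$ a probability distribution on $\{0,1\}$ for each $x$ and $D(\cdot|m)$ a probability distribution on $\mathcal{B}$ for each $m$ (one bit of classical communication with local randomness). $\mathcal{C}_K$: one bit of classical communication assisted by a shared random variable taking at most $K$ values, i.e. correlations $\sum_{\lambda=1}^{K}q_\lambda P_\lambda$ with $q_\lambda\ge0$, $\sum_\lambda q_\lambda=1$, $P_\lambda\in\mathcal{C}$. Thus $\mathcal{C}_2$ corresponds to (at most) $1$ bit of shared randomness (a binary shared variable with arbitrary bias) and $\mathcal{C}_3$ to $\log 3$ bits (a shared variable with three values). *)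

theory Defs
  imports "HOL-Analysis.Analysis" "HOL-Library.Extended_Real"
begin

text \<open>A correlation is represented as a function P :: nat => nat => real, P x b = P(b|x),
  normalised to be 0 outside X x B.\<close>

definition one_bit_corr :: "nat set \<Rightarrow> nat set \<Rightarrow> (nat \<Rightarrow> nat \<Rightarrow> real) set" where
  "one_bit_corr X B = {P. \<exists>E D :: nat \<Rightarrow> nat \<Rightarrow> real.
      (\<forall>x\<in>X. (\<forall>m\<in>{0,1}. E x m \<ge> 0) \<and> (\<Sum>m\<in>{0,1}. E x m) = 1) \<and>
      (\<forall>m\<in>{0,1::nat}. (\<forall>b\<in>B. D m b \<ge> 0) \<and> (\<Sum>b\<in>B. D m b) = 1) \<and>
      (\<forall>x b. P x b = (if x \<in> X \<and> b \<in> B then (\<Sum>m\<in>{0,1}. E x m * D m b) else 0))}"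

text \<open>One bit of communication assisted by a shared random variable with at most K values:
  convex combinations of K elements of the one-bit set.\<close>
definition shared_corr :: "nat \<Rightarrow> nat set \<Rightarrow> nat set \<Rightarrow> (nat \<Rightarrow> nat \<Rightarrow> real) set" where
  "shared_corr K X B = {P. \<exists>(q :: nat \<Rightarrow> real) (Q :: nat \<Rightarrow> nat \<Rightarrow> nat \<Rightarrow> real).
      (\<forall>l\<in>{1..K}. q l \<ge> 0 \<and> Q l \<in> one_bit_corr X B) \<and> (\<Sum>l\<in>{1..K}. q l) = 1 \<and>
      P = (\<lambda>x b. \<Sum>l\<in>{1..K}. q l * Q l x b)}"

definition utility :: "((nat \<Rightarrow> nat \<Rightarrow> real) \<Rightarrow> real) \<Rightarrow> (nat \<Rightarrow> nat \<Rightarrow> real) set \<Rightarrow> ereal" where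
  "utility \<beta> S = (SUP P\<in>S. ereal (\<beta> P))"

end

theory Submission
  imports Defs
begin

lemma det_contra:
  fixes a1 a2 a3 b1 b2 b3 u1 u2 u3 w1 w2 w3 :: real
  assumes "a1*u1+b1*w1 = 0" "a1*u2+b1*w2 = 1/3" "a1*u3+b1*w3 = 1/3"
          "a2*u1+b2*w1 = 1/3" "a2*u2+b2*w2 = 0" "a2*u3+b2*w3 = 1/3"
          "a3*u1+b3*w1 = 1/3" "a3*u2+b3*w2 = 1/3" "a3*u3+b3*w3 = 0"
  shows False
proof -
  have "(a1*u1+b1*w1)*((a2*u2+b2*w2)*(a3*u3+b3*w3) - (a2*u3+b2*w3)*(a3*u2+b3*w2))
      - (a1*u2+b1*w2)*((a2*u1+b2*w1)*(a3*u3+b3*w3) - (a2*u3+b2*w3)*(a3*u1+b3*w1))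
      + (a1*u3+b1*w3)*((a2*u1+b2*w1)*(a3*u2+b3*w2) - (a2*u2+b2*w2)*(a3*u1+b3*w1)) = 0"
    by (simp add: algebra_simps)
  then show False using assms by simp
qed

definition gg :: "nat \<Rightarrow> nat \<Rightarrow> bool" where
  "gg l x = (if l = 1 then x \<ge> 2 else if l = 2 then odd x else (x = 1 \<or> x = 2))"

definition QQ :: "nat \<Rightarrow> nat \<Rightarrow> nat \<Rightarrow> real" where
  "QQ l x b = (if x \<in> {0..3} \<and> b \<in> {0..3} then
      (if b = (if gg l x then l else 0) then 1 else 0) else 0)"

definition Pstar :: "nat \<Rightarrow> nat \<Rightarrow> real" where
  "Pstar = (\<lambda>x b. \<Sum>l\<in>{1..3}. 1/3 * QQ l x b)"

lemma QQ_in: "l \<in> {1..3} \<Longrightarrow> QQ l \<in> one_bit_corr {0..3} {0..3}"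
  unfolding one_bit_corr_def
proof (intro CollectI exI conjI ballI allI)
  assume l: "l \<in> {1..3}"
  let ?E = "\<lambda>x (m::nat). if m = 0 then (if gg l x then 0 else 1) else (if gg l x then 1 else (0::real))"
  let ?D = "\<lambda>(m::nat) b. if m = 0 then (if b = 0 then 1 else 0) else (if b = l then 1 else (0::real))"
  show "\<And>x m. x \<in> {0..3} \<Longrightarrow> m \<in> {0, 1} \<Longrightarrow> 0 \<le> ?E x m" by auto
  show "\<And>x. x \<in> {0..3} \<Longrightarrow> (\<Sum>m\<in>{0, 1}. ?E x m) = 1" by (simp add: sum.insert_if)
  show "\<And>m b. m \<in> {0, 1} \<Longrightarrow> b \<in> {0..3} \<Longrightarrow> 0 \<le> ?D m b" by auto
  show "\<And>m. m \<in> {0, 1} \<Longrightarrow> (\<Sum>b\<in>{0..3}. ?D m b) = 1"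
    using l by (auto simp: sum.delta)
  show "\<And>x b. QQ l x b = (if x \<in> {0..3} \<and> b \<in> {0..3} then \<Sum>m\<in>{0, 1}. ?E x m * ?D m b else 0)"
    using l by (auto simp: QQ_def)
qed

lemma Pstar_in: "Pstar \<in> shared_corr 3 {0..3} {0..3}"
  unfolding shared_corr_def Pstar_def
  apply (rule CollectI)
  apply (rule exI[of _ "\<lambda>_. 1/3"], rule exI[of _ QQ])
  using QQ_in by auto

lemma three_eq: "{1..3::nat} = {1,2,3}" by auto

lemma Pstar_expand: "Pstar x b = 1/3 * QQ 1 x b + 1/3 * QQ 2 x b + 1/3 * QQ 3 x b"
  unfolding Pstar_def three_eq by simp

lemma Pstar_vals:
  "Pstar 0 1 = 0" "Pstar 0 2 = 0" "Pstar 0 3 = 0"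
  "Pstar 1 1 = 0" "Pstar 1 2 = 1/3" "Pstar 1 3 = 1/3"
  "Pstar 2 1 = 1/3" "Pstar 2 2 = 0" "Pstar 2 3 = 1/3"
  "Pstar 3 1 = 1/3" "Pstar 3 2 = 1/3" "Pstar 3 3 = 0"
  by (simp_all add: Pstar_expand QQ_def gg_def)

lemma one_bit_elim: "P \<in> one_bit_corr X B \<Longrightarrow> \<exists>E D :: nat \<Rightarrow> nat \<Rightarrow> real.
   (\<forall>x\<in>X. (\<Sum>m\<in>{0,1}. E x m) = 1) \<and>
   (\<forall>x b. P x b = (if x \<in> X \<and> b \<in> B then (\<Sum>m\<in>{0,1}. E x m * D m b) else 0))"
  unfolding one_bit_corr_def by blast

lemma two_eq: "{1..2::nat} = {1,2}" by auto

lemma Pstar_notin: "Pstar \<notin> shared_corr 2 {0..3} {0..3}"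
proof
  assume "Pstar \<in> shared_corr 2 {0..3} {0..3}"
  then obtain q Q where h: "\<forall>l\<in>{1..2::nat}. q l \<ge> 0 \<and> Q l \<in> one_bit_corr {0..3} {0..3}"
    and P: "Pstar = (\<lambda>x b. \<Sum>l\<in>{1..2::nat}. q l * Q l x b)"
    unfolding shared_corr_def mem_Collect_eq by (elim exE conjE) (rule that, assumption+)
  have m1: "Q 1 \<in> one_bit_corr {0..3} {0..3}" and m2: "Q 2 \<in> one_bit_corr {0..3} {0..3}" using h by auto
  obtain E1 D1 :: "nat \<Rightarrow> nat \<Rightarrow> real" where
    E1: "\<forall>x\<in>{0..3}. (\<Sum>m\<in>{0,1}. E1 x m) = 1" and
    Q1: "\<forall>x b. Q 1 x b = (if x \<in> {0..3} \<and> b \<in> {0..3} then (\<Sum>m\<in>{0,1}. E1 x m * D1 m b) else 0)"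
    using one_bit_elim[OF m1] by (elim exE conjE)
  obtain E2 D2 :: "nat \<Rightarrow> nat \<Rightarrow> real" where
    E2: "\<forall>x\<in>{0..3}. (\<Sum>m\<in>{0,1}. E2 x m) = 1" and
    Q2: "\<forall>x b. Q 2 x b = (if x \<in> {0..3} \<and> b \<in> {0..3} then (\<Sum>m\<in>{0,1}. E2 x m * D2 m b) else 0)"
    using one_bit_elim[OF m2] by (elim exE conjE)
  define u where "u b = q 1 * (D1 0 b - D1 1 b)" for b
  define w where "w b = q 2 * (D2 0 b - D2 1 b)" for b
  define a where "a x = E1 x 0 - E1 0 0" for x
  define c where "c x = E2 x 0 - E2 0 0" for x
  have key: "Pstar x b = q 1 * (D1 1 b + E1 x 0 * (D1 0 b - D1 1 b)) + q 2 * (D2 1 b + E2 x 0 * (D2 0 b - D2 1 b))"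
    if "x \<le> 3" "b \<le> 3" for x b
  proof -
    have "E1 x 0 + E1 x 1 = 1" "E2 x 0 + E2 x 1 = 1" using E1 E2 that by auto
    then have e1: "E1 x 1 = 1 - E1 x 0" "E2 x 1 = 1 - E2 x 0" by linarith+
    have q1: "Q 1 x b = E1 x 0 * D1 0 b + E1 x 1 * D1 1 b" using Q1 that by simp
    have q2: "Q 2 x b = E2 x 0 * D2 0 b + E2 x 1 * D2 1 b" using Q2 that by simp
    have p: "Pstar x b = q 1 * Q 1 x b + q 2 * Q 2 x b" unfolding P two_eq by simp
    show ?thesis unfolding p q1 q2 e1 by (simp add: algebra_simps)
  qed
  have d: "Pstar x b - Pstar 0 b = a x * u b + c x * w b" if "x \<le> 3" "b \<le> 3" for x b
  proof -
    have k0: "Pstar 0 b = q 1 * (D1 1 b + E1 0 0 * (D1 0 b - D1 1 b)) + q 2 * (D2 1 b + E2 0 0 * (D2 0 b - D2 1 b))"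
      using key[of 0 b] that(2) by simp
    have "Pstar x b - Pstar 0 b = q 1 * (E1 x 0 - E1 0 0) * (D1 0 b - D1 1 b) + q 2 * (E2 x 0 - E2 0 0) * (D2 0 b - D2 1 b)"
      unfolding key[OF that] k0 by (simp add: algebra_simps)
    then show ?thesis unfolding a_def c_def u_def w_def by (simp only: mult.assoc mult.commute mult.left_commute)
  qed
  show False
    apply (rule det_contra[of "a 1" "u 1" "c 1" "w 1" "u 2" "w 2" "u 3" "w 3" "a 2" "c 2" "a 3" "c 3"])
    using d[of 1 1, unfolded Pstar_vals] d[of 1 2, unfolded Pstar_vals] d[of 1 3, unfolded Pstar_vals]
      d[of 2 1, unfolded Pstar_vals] d[of 2 2, unfolded Pstar_vals] d[of 2 3, unfolded Pstar_vals]
      d[of 3 1, unfolded Pstar_vals] d[of 3 2, unfolded Pstar_vals] d[of 3 3, unfolded Pstar_vals]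
    by simp_all
qed

theorem theorem3:
  shows "\<exists>(X :: nat set) (B :: nat set) (\<beta> :: (nat \<Rightarrow> nat \<Rightarrow> real) \<Rightarrow> real).
           finite X \<and> X \<noteq> {} \<and> finite B \<and> B \<noteq> {} \<and>
           utility \<beta> (shared_corr 3 X B) > utility \<beta> (shared_corr 2 X B)"
proof (intro exI conjI)
  let ?\<beta> = "\<lambda>P. if P = Pstar then 1 else (0::real)"
  have A: "utility ?\<beta> (shared_corr 2 {0..3} {0..3}) \<le> 0"
    unfolding utility_def using Pstar_notin by (intro SUP_least) auto
  have B: "utility ?\<beta> (shared_corr 3 {0..3} {0..3}) \<ge> 1"
    unfolding utility_def using Pstar_in by (intro SUP_upper2[of Pstar]) auto
  show "utility ?\<beta> (shared_corr 3 {0..3} {0..3}) > utility ?\<beta> (shared_corr 2 {0..3} {0..3})"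
  proof -
    have "utility ?\<beta> (shared_corr 2 {0..3} {0..3}) < 1"
      using A by (rule le_less_trans) simp
    then show ?thesis using B by (rule less_le_trans)
  qed
qed auto

end
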